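(* Let $q$ be a self-join-free Boolean conjunctive query, let $q_0\subseteq q$, let $\mathbf{db}$ be a database, and let $\mathbf{o}$ be a garbage set for $q_0$ in $\mathbf{db}$. Then every garbage set for $q_0$ in $\mathbf{db}\setminus\mathbf{o}$ is empty if and only if $\mathbf{o}$ is the maximal (with respect to $\subseteq$) garbage set for $q_0$ in $\mathbf{db}$.
   Context: Every relation name has a signature $[n,k]$ ($1\le k\le n$; primary-key positions $1,\dots,k$) and a mode in $\{\mathsf{c},\mathsf{i}\}$. Facts are variable-free atoms; facts are key-equal if same relation name and same primary-key values. A database is a finite set of facts with no two distinct key-equal facts of mode $\mathsf{c}$, all of whose relation names occur in $q$. The block of a fact $A$ in $\mathbf{db}$ is the set of facts of $\mathbf{db}$ key-equal to $A$. A repair of a set of facts is a maximal subset without two distinct key-equal facts. A self-join-free Boolean conjunctive query is a finite set of atoms with distinct relation names; for a fact $A$, $\mathrm{atom}(A)$ is the atom of $q$ with the same relation name. A subset $\mathbf{o}\subseteq\mathbf{db}$ is a garbage set for $q_0$ in $\mathbf{db}$ if (1) for every $A\in\mathbf{o}$, $\mathrm{atom}(A)\in q_0$ and the block of $A$ in $\mathbf{db}$ is included in $\mathbf{o}$; and (2) there is a repair $\mathbf{r}$ of $\mathbf{o}$ such that for every valuation $\theta$ of the variables of $q$, if $\theta(q)\subseteq(\mathbf{db}\setminus\mathbf{o})\cup\mathbf{r}$ then $\theta(q_0)\cap\mathbf{r}=\emptyset$. Garbage sets are closed under union, so a unique maximal garbage set exists. *)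

theory Defs
  imports Main
begin

(* Modes of relation names: c (consistent) and i (possibly inconsistent). *)
datatype mode = ModeC | ModeI

datatype ('v, 'c) trm = Var 'v | Const 'c

datatype ('r, 'v, 'c) atom = Atom (arel: 'r) (aargs: "('v, 'c) trm list")
datatype ('r, 'c) fact = Fact (frel: 'r) (fargs: "'c list")

(* A schema: sig R = (n, k) is the signature [n,k] of R, md R its mode.
   Every relation name has a signature with 1 <= k <= n. *)
definition schema_ok :: "('r \<Rightarrow> nat \<times> nat) \<Rightarrow> bool" where
  "schema_ok sig \<longleftrightarrow> (\<forall>R. 1 \<le> snd (sig R) \<and> snd (sig R) \<le> fst (sig R))"

definition fact_wf :: "('r \<Rightarrow> nat \<times> nat) \<Rightarrow> ('r, 'c) fact \<Rightarrow> bool" where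
  "fact_wf sig A \<longleftrightarrow> length (fargs A) = fst (sig (frel A))"

definition atom_wf :: "('r \<Rightarrow> nat \<times> nat) \<Rightarrow> ('r, 'v, 'c) atom \<Rightarrow> bool" where
  "atom_wf sig a \<longleftrightarrow> length (aargs a) = fst (sig (arel a))"

definition key_equal :: "('r \<Rightarrow> nat \<times> nat) \<Rightarrow> ('r, 'c) fact \<Rightarrow> ('r, 'c) fact \<Rightarrow> bool" where
  "key_equal sig A B \<longleftrightarrow> frel A = frel B \<and>
     take (snd (sig (frel A))) (fargs A) = take (snd (sig (frel B))) (fargs B)"

definition sjf_bcq :: "('r \<Rightarrow> nat \<times> nat) \<Rightarrow> ('r, 'v, 'c) atom set \<Rightarrow> bool" where
  "sjf_bcq sig q \<longleftrightarrow> finite q \<and> (\<forall>a\<in>q. atom_wf sig a) \<and>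
     (\<forall>a\<in>q. \<forall>b\<in>q. arel a = arel b \<longrightarrow> a = b)"

definition database ::
  "('r \<Rightarrow> nat \<times> nat) \<Rightarrow> ('r \<Rightarrow> mode) \<Rightarrow> ('r, 'v, 'c) atom set \<Rightarrow> ('r, 'c) fact set \<Rightarrow> bool" where
  "database sig md q db \<longleftrightarrow> finite db \<and> (\<forall>A\<in>db. fact_wf sig A) \<and>
     (\<forall>A\<in>db. \<forall>B\<in>db. key_equal sig A B \<and> md (frel A) = ModeC \<and> A \<noteq> B \<longrightarrow> False) \<and>
     (\<forall>A\<in>db. \<exists>a\<in>q. arel a = frel A)"

definition block :: "('r \<Rightarrow> nat \<times> nat) \<Rightarrow> ('r, 'c) fact set \<Rightarrow> ('r, 'c) fact \<Rightarrow> ('r, 'c) fact set" where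
  "block sig db A = {B \<in> db. key_equal sig A B}"

definition consistent :: "('r \<Rightarrow> nat \<times> nat) \<Rightarrow> ('r, 'c) fact set \<Rightarrow> bool" where
  "consistent sig S \<longleftrightarrow> (\<forall>A\<in>S. \<forall>B\<in>S. key_equal sig A B \<longrightarrow> A = B)"

definition repair :: "('r \<Rightarrow> nat \<times> nat) \<Rightarrow> ('r, 'c) fact set \<Rightarrow> ('r, 'c) fact set \<Rightarrow> bool" where
  "repair sig r S \<longleftrightarrow> r \<subseteq> S \<and> consistent sig r \<and>
     (\<forall>r'. r \<subseteq> r' \<and> r' \<subseteq> S \<and> consistent sig r' \<longrightarrow> r' = r)"

definition atom_of :: "('r, 'v, 'c) atom set \<Rightarrow> ('r, 'c) fact \<Rightarrow> ('r, 'v, 'c) atom" where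
  "atom_of q A = (THE a. a \<in> q \<and> arel a = frel A)"

fun trm_val :: "('v \<Rightarrow> 'c) \<Rightarrow> ('v, 'c) trm \<Rightarrow> 'c" where
  "trm_val \<theta> (Var x) = \<theta> x"
| "trm_val \<theta> (Const c) = c"

definition atom_val :: "('v \<Rightarrow> 'c) \<Rightarrow> ('r, 'v, 'c) atom \<Rightarrow> ('r, 'c) fact" where
  "atom_val \<theta> a = Fact (arel a) (map (trm_val \<theta>) (aargs a))"

definition query_val :: "('v \<Rightarrow> 'c) \<Rightarrow> ('r, 'v, 'c) atom set \<Rightarrow> ('r, 'c) fact set" where
  "query_val \<theta> q = atom_val \<theta> ` q"

definition garbage_set ::
  "('r \<Rightarrow> nat \<times> nat) \<Rightarrow> ('r, 'v, 'c) atom set \<Rightarrow> ('r, 'v, 'c) atom set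
   \<Rightarrow> ('r, 'c) fact set \<Rightarrow> ('r, 'c) fact set \<Rightarrow> bool" where
  "garbage_set sig q q0 db g \<longleftrightarrow> g \<subseteq> db \<and>
     (\<forall>A\<in>g. atom_of q A \<in> q0 \<and> block sig db A \<subseteq> g) \<and>
     (\<exists>r. repair sig r g \<and>
        (\<forall>\<theta>. query_val \<theta> q \<subseteq> (db - g) \<union> r \<longrightarrow> query_val \<theta> q0 \<inter> r = {}))"

definition max_garbage_set ::
  "('r \<Rightarrow> nat \<times> nat) \<Rightarrow> ('r, 'v, 'c) atom set \<Rightarrow> ('r, 'v, 'c) atom set
   \<Rightarrow> ('r, 'c) fact set \<Rightarrow> ('r, 'c) fact set \<Rightarrow> bool" where
  "max_garbage_set sig q q0 db g \<longleftrightarrow> garbage_set sig q q0 db g \<and>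
     (\<forall>g'. garbage_set sig q q0 db g' \<longrightarrow> g' \<subseteq> g)"

end

theory Submission
  imports Defs
begin

lemma ke_sym: "key_equal sig A B \<Longrightarrow> key_equal sig B A"
  by (auto simp: key_equal_def)

definition nocross where
  "nocross sig S1 S2 \<longleftrightarrow> (\<forall>A\<in>S1. \<forall>B\<in>S2. \<not> key_equal sig A B)"

lemma repair_union:
  assumes nc: "nocross sig S1 S2" and a1: "repair sig r1 S1" and a2: "repair sig r2 S2"
  shows "repair sig (r1 \<union> r2) (S1 \<union> S2)"
proof -
  have s1: "r1 \<subseteq> S1" and c1: "consistent sig r1"
    and m1: "\<And>r'. r1 \<subseteq> r' \<Longrightarrow> r' \<subseteq> S1 \<Longrightarrow> consistent sig r' \<Longrightarrow> r' = r1"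
    using a1 unfolding repair_def by blast+
  have s2: "r2 \<subseteq> S2" and c2: "consistent sig r2"
    and m2: "\<And>r'. r2 \<subseteq> r' \<Longrightarrow> r' \<subseteq> S2 \<Longrightarrow> consistent sig r' \<Longrightarrow> r' = r2"
    using a2 unfolding repair_def by blast+
  have ncx: "\<And>A B. A \<in> S1 \<Longrightarrow> B \<in> S2 \<Longrightarrow> key_equal sig A B \<Longrightarrow> False"
    using nc unfolding nocross_def by blast
  have c: "consistent sig (r1 \<union> r2)"
    unfolding consistent_def
  proof (intro ballI impI)
    fix A B assume A: "A \<in> r1 \<union> r2" and B: "B \<in> r1 \<union> r2" and k: "key_equal sig A B"
    show "A = B"
    proof (cases "A \<in> r1")
      case True
      then show ?thesis
      proof (cases "B \<in> r1")
        case True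
        then show ?thesis using c1 \<open>A \<in> r1\<close> k unfolding consistent_def by blast
      next
        case False
        then have "B \<in> S2" using B s2 by blast
        then show ?thesis using ncx[of A B] True s1 k by blast
      qed
    next
      case False
      then have A2: "A \<in> r2" using A by blast
      show ?thesis
      proof (cases "B \<in> r1")
        case True
        then show ?thesis using ncx[of B A] A2 s1 s2 ke_sym[OF k] by blast
      next
        case False
        then show ?thesis using c2 A2 B k unfolding consistent_def by blast
      qed
    qed
  qed
  have m: "R = r1 \<union> r2" if h: "r1 \<union> r2 \<subseteq> R" "R \<subseteq> S1 \<union> S2" "consistent sig R" for R
  proof -
    have cs: "consistent sig (R \<inter> S1)" "consistent sig (R \<inter> S2)"
      using h(3) unfolding consistent_def by blast+
    have "R \<inter> S1 = r1" using m1[of "R \<inter> S1"] h(1) s1 cs by blast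
    moreover have "R \<inter> S2 = r2" using m2[of "R \<inter> S2"] h(1) s2 cs by blast
    ultimately show ?thesis using h(2) by blast
  qed
  show ?thesis unfolding repair_def using s1 s2 c m by blast
qed

lemma repair_restrict:
  assumes nc: "nocross sig S1 S2" and a: "repair sig r (S1 \<union> S2)"
  shows "repair sig (r \<inter> S2) S2"
proof -
  have s: "r \<subseteq> S1 \<union> S2" and cr: "consistent sig r"
    and mr: "\<And>r'. r \<subseteq> r' \<Longrightarrow> r' \<subseteq> S1 \<union> S2 \<Longrightarrow> consistent sig r' \<Longrightarrow> r' = r"
    using a unfolding repair_def by blast+
  have ncx: "\<And>A B. A \<in> S1 \<Longrightarrow> B \<in> S2 \<Longrightarrow> key_equal sig A B \<Longrightarrow> False"
    using nc unfolding nocross_def by blast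
  have c: "consistent sig (r \<inter> S2)" using cr unfolding consistent_def by blast
  have m: "R = r \<inter> S2" if h: "r \<inter> S2 \<subseteq> R" "R \<subseteq> S2" "consistent sig R" for R
  proof -
    have "consistent sig ((r \<inter> S1) \<union> R)"
      unfolding consistent_def
    proof (intro ballI impI)
      fix A B assume A: "A \<in> (r \<inter> S1) \<union> R" and B: "B \<in> (r \<inter> S1) \<union> R" and k: "key_equal sig A B"
      show "A = B"
      proof (cases "A \<in> R")
        case True
        then show ?thesis
        proof (cases "B \<in> R")
          case True
          then show ?thesis using h(3) \<open>A \<in> R\<close> k unfolding consistent_def by blast
        next
          case False
          then have "B \<in> S1" using B by blast
          then show ?thesis using ncx[of B A] True h(2) ke_sym[OF k] by blast
        qed
      next
        case False
        then have A1: "A \<in> r \<inter> S1" using A by blast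
        show ?thesis
        proof (cases "B \<in> R")
          case True
          then show ?thesis using ncx[of A B] A1 h(2) k by blast
        next
          case False
          then show ?thesis using cr A1 B k unfolding consistent_def by blast
        qed
      qed
    qed
    moreover have "r \<subseteq> (r \<inter> S1) \<union> R" "(r \<inter> S1) \<union> R \<subseteq> S1 \<union> S2"
      using s h by blast+
    ultimately have "(r \<inter> S1) \<union> R = r" using mr by blast
    then show ?thesis using h ncx by blast
  qed
  show ?thesis unfolding repair_def using c m by blast
qed

lemma atom_of_val:
  assumes "sjf_bcq sig q" "a \<in> q"
  shows "atom_of q (atom_val \<theta> a) = a"
  unfolding atom_of_def atom_val_def
  using assms unfolding sjf_bcq_def by (intro the_equality) auto

lemma avoid_all:
  assumes "sjf_bcq sig q" "\<forall>A\<in>g. atom_of q A \<in> q0" "query_val \<theta> q0 \<inter> r = {}" "r \<subseteq> g"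
  shows "query_val \<theta> q \<inter> r = {}"
proof (rule ccontr)
  assume "query_val \<theta> q \<inter> r \<noteq> {}"
  then obtain a where a: "a \<in> q" "atom_val \<theta> a \<in> r" unfolding query_val_def by blast
  then have "a \<in> q0" using assms atom_of_val[OF assms(1) a(1)] by (metis subsetD)
  then show False using a assms(3) unfolding query_val_def by blast
qed

lemma closed_nocross:
  assumes "\<forall>A\<in>g. block sig db A \<subseteq> g" "S \<subseteq> db - g"
  shows "nocross sig g S"
  using assms unfolding nocross_def block_def by blast

lemma gsD:
  assumes "garbage_set sig q q0 db g"
  shows "g \<subseteq> db" "\<And>A. A \<in> g \<Longrightarrow> atom_of q A \<in> q0" "\<And>A. A \<in> g \<Longrightarrow> block sig db A \<subseteq> g"
    "\<exists>r. repair sig r g \<and>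
        (\<forall>\<theta>. query_val \<theta> q \<subseteq> (db - g) \<union> r \<longrightarrow> query_val \<theta> q0 \<inter> r = {})"
  using assms unfolding garbage_set_def by blast+

lemma gsI:
  assumes "g \<subseteq> db" "\<And>A. A \<in> g \<Longrightarrow> atom_of q A \<in> q0" "\<And>A. A \<in> g \<Longrightarrow> block sig db A \<subseteq> g"
    "repair sig r g" "\<And>\<theta>. query_val \<theta> q \<subseteq> (db - g) \<union> r \<Longrightarrow> query_val \<theta> q0 \<inter> r = {}"
  shows "garbage_set sig q q0 db g"
  using assms unfolding garbage_set_def by blast

lemma gs_union:
  assumes sj: "sjf_bcq sig q" and g: "garbage_set sig q q0 db g" and G: "garbage_set sig q q0 db G"
  shows "garbage_set sig q q0 db (g \<union> G)"
proof -
  obtain r1 where r1: "repair sig r1 g"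
    "\<And>\<theta>. query_val \<theta> q \<subseteq> (db - g) \<union> r1 \<Longrightarrow> query_val \<theta> q0 \<inter> r1 = {}"
    using gsD(4)[OF g] by blast
  obtain r2 where r2: "repair sig r2 G"
    "\<And>\<theta>. query_val \<theta> q \<subseteq> (db - G) \<union> r2 \<Longrightarrow> query_val \<theta> q0 \<inter> r2 = {}"
    using gsD(4)[OF G] by blast
  have gc1: "\<forall>A\<in>g. block sig db A \<subseteq> g" using gsD(3)[OF g] by blast
  have gc2: "\<forall>A\<in>g. atom_of q A \<in> q0" using gsD(2)[OF g] by blast
  have Gd: "G \<subseteq> db" using gsD(1)[OF G] .
  have "G - g \<subseteq> db - g" using Gd by blast
  then have nc: "nocross sig g (G - g)" using closed_nocross[OF gc1] by blast
  have nc2: "nocross sig (G \<inter> g) (G - g)" using nc unfolding nocross_def by blast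
  have eqG: "(G \<inter> g) \<union> (G - g) = G" by blast
  have "repair sig (r2 \<inter> (G - g)) (G - g)"
    using repair_restrict[OF nc2] r2(1) unfolding eqG by blast
  then have rr0: "repair sig (r1 \<union> (r2 \<inter> (G - g))) (g \<union> (G - g))"
    using repair_union[OF nc r1(1)] by blast
  have eqU: "g \<union> (G - g) = g \<union> G" by blast
  have rr: "repair sig (r1 \<union> (r2 \<inter> (G - g))) (g \<union> G)" using rr0 unfolding eqU .
  have r1g: "r1 \<subseteq> g" using r1(1) unfolding repair_def by blast
  show ?thesis
  proof (rule gsI[OF _ _ _ rr])
    show "g \<union> G \<subseteq> db" using gsD(1)[OF g] Gd by blast
    show "atom_of q A \<in> q0" if "A \<in> g \<union> G" for A using that gsD(2)[OF g] gsD(2)[OF G] by blast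
    show "block sig db A \<subseteq> g \<union> G" if "A \<in> g \<union> G" for A using that gsD(3)[OF g] gsD(3)[OF G] by blast
    fix \<theta>
    assume h: "query_val \<theta> q \<subseteq> (db - (g \<union> G)) \<union> (r1 \<union> (r2 \<inter> (G - g)))"
    have "query_val \<theta> q \<subseteq> (db - g) \<union> r1" using h Gd by blast
    then have e1: "query_val \<theta> q0 \<inter> r1 = {}" using r1(2) by blast
    then have "query_val \<theta> q \<inter> r1 = {}" using avoid_all[OF sj gc2 e1 r1g] by blast
    then have "query_val \<theta> q \<subseteq> (db - G) \<union> r2" using h by blast
    then have "query_val \<theta> q0 \<inter> r2 = {}" using r2(2) by blast
    then show "query_val \<theta> q0 \<inter> (r1 \<union> (r2 \<inter> (G - g))) = {}" using e1 by blast
  qed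
qed

lemma gs_diff:
  assumes g: "garbage_set sig q q0 db g" and U: "garbage_set sig q q0 db U" and sub: "g \<subseteq> U"
  shows "garbage_set sig q q0 (db - g) (U - g)"
proof -
  obtain r where r: "repair sig r U"
    "\<And>\<theta>. query_val \<theta> q \<subseteq> (db - U) \<union> r \<Longrightarrow> query_val \<theta> q0 \<inter> r = {}"
    using gsD(4)[OF U] by blast
  have gc: "\<forall>A\<in>g. block sig db A \<subseteq> g" using gsD(3)[OF g] by blast
  have Ud: "U \<subseteq> db" using gsD(1)[OF U] .
  have "U - g \<subseteq> db - g" using Ud by blast
  then have nc: "nocross sig g (U - g)" using closed_nocross[OF gc] by blast
  have eq: "g \<union> (U - g) = U" using sub by blast
  have rr: "repair sig (r \<inter> (U - g)) (U - g)"
    using repair_restrict[OF nc] r(1) unfolding eq by blast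
  show ?thesis
  proof (rule gsI[OF _ _ _ rr])
    show "U - g \<subseteq> db - g" using Ud by blast
    show "atom_of q A \<in> q0" if "A \<in> U - g" for A using that gsD(2)[OF U] by blast
    show "block sig (db - g) A \<subseteq> U - g" if "A \<in> U - g" for A
      using that gsD(3)[OF U, of A] unfolding block_def by blast
    fix \<theta>
    assume h: "query_val \<theta> q \<subseteq> ((db - g) - (U - g)) \<union> (r \<inter> (U - g))"
    have "query_val \<theta> q \<subseteq> (db - U) \<union> r" using h sub by blast
    then show "query_val \<theta> q0 \<inter> (r \<inter> (U - g)) = {}" using r(2) by blast
  qed
qed

lemma gs_comp:
  assumes sj: "sjf_bcq sig q" and g: "garbage_set sig q q0 db g"
    and g': "garbage_set sig q q0 (db - g) g'"
  shows "garbage_set sig q q0 db (g \<union> g')"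
proof -
  obtain r1 where r1: "repair sig r1 g"
    "\<And>\<theta>. query_val \<theta> q \<subseteq> (db - g) \<union> r1 \<Longrightarrow> query_val \<theta> q0 \<inter> r1 = {}"
    using gsD(4)[OF g] by blast
  obtain r2 where r2: "repair sig r2 g'"
    "\<And>\<theta>. query_val \<theta> q \<subseteq> ((db - g) - g') \<union> r2 \<Longrightarrow> query_val \<theta> q0 \<inter> r2 = {}"
    using gsD(4)[OF g'] by blast
  have gc1: "\<forall>A\<in>g. block sig db A \<subseteq> g" using gsD(3)[OF g] by blast
  have gc2: "\<forall>A\<in>g. atom_of q A \<in> q0" using gsD(2)[OF g] by blast
  have g's: "g' \<subseteq> db - g" using gsD(1)[OF g'] .
  have nc: "nocross sig g g'" using closed_nocross[OF gc1 g's] .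
  have rr: "repair sig (r1 \<union> r2) (g \<union> g')" using repair_union[OF nc r1(1) r2(1)] .
  have r1g: "r1 \<subseteq> g" using r1(1) unfolding repair_def by blast
  have r2g: "r2 \<subseteq> g'" using r2(1) unfolding repair_def by blast
  show ?thesis
  proof (rule gsI[OF _ _ _ rr])
    show "g \<union> g' \<subseteq> db" using gsD(1)[OF g] g's by blast
    show "atom_of q A \<in> q0" if "A \<in> g \<union> g'" for A using that gsD(2)[OF g] gsD(2)[OF g'] by blast
    show "block sig db A \<subseteq> g \<union> g'" if A0: "A \<in> g \<union> g'" for A
    proof (cases "A \<in> g")
      case True then show ?thesis using gc1 by blast
    next
      case False
      then have A: "A \<in> g'" using A0 by blast
      show ?thesis
      proof
        fix B assume B: "B \<in> block sig db A"
        have "B \<notin> g"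
        proof
          assume Bg: "B \<in> g"
          have "key_equal sig B A" using B unfolding block_def by (blast dest: ke_sym)
          then have "A \<in> block sig db B" using A g's unfolding block_def by blast
          then have "A \<in> g" using gc1 Bg by blast
          then show False using A g's by blast
        qed
        then have "B \<in> block sig (db - g) A" using B unfolding block_def by blast
        then show "B \<in> g \<union> g'" using gsD(3)[OF g' A] by blast
      qed
    qed
    fix \<theta>
    assume h: "query_val \<theta> q \<subseteq> (db - (g \<union> g')) \<union> (r1 \<union> r2)"
    have "query_val \<theta> q \<subseteq> (db - g) \<union> r1" using h g's r2g by blast
    then have e1: "query_val \<theta> q0 \<inter> r1 = {}" using r1(2) by blast
    then have "query_val \<theta> q \<inter> r1 = {}" using avoid_all[OF sj gc2 e1 r1g] by blast
    then have "query_val \<theta> q \<subseteq> ((db - g) - g') \<union> r2" using h by blast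
    then have "query_val \<theta> q0 \<inter> r2 = {}" using r2(2) by blast
    then show "query_val \<theta> q0 \<inter> (r1 \<union> r2) = {}" using e1 by blast
  qed
qed

theorem lemma17:
  fixes sig :: "'r \<Rightarrow> nat \<times> nat" and md :: "'r \<Rightarrow> mode"
    and q q0 :: "('r, 'v, 'c) atom set" and db g :: "('r, 'c) fact set"
  assumes "schema_ok sig"
    and "sjf_bcq sig q"
    and "q0 \<subseteq> q"
    and "database sig md q db"
    and "garbage_set sig q q0 db g"
  shows "(\<forall>g'. garbage_set sig q q0 (db - g) g' \<longrightarrow> g' = {}) \<longleftrightarrow> max_garbage_set sig q q0 db g"
proof
  assume H: "\<forall>g'. garbage_set sig q q0 (db - g) g' \<longrightarrow> g' = {}"
  have "G \<subseteq> g" if G: "garbage_set sig q q0 db G" for G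
  proof -
    have "garbage_set sig q q0 db (g \<union> G)" using gs_union[OF assms(2) assms(5) G] .
    then have "garbage_set sig q q0 (db - g) ((g \<union> G) - g)" using gs_diff[OF assms(5)] by (meson Un_upper1)
    then have "(g \<union> G) - g = {}" using H by blast
    then show ?thesis by blast
  qed
  then show "max_garbage_set sig q q0 db g" using assms(5) unfolding max_garbage_set_def by blast
next
  assume M: "max_garbage_set sig q q0 db g"
  show "\<forall>g'. garbage_set sig q q0 (db - g) g' \<longrightarrow> g' = {}"
  proof (intro allI impI)
    fix g' assume g': "garbage_set sig q q0 (db - g) g'"
    have "garbage_set sig q q0 db (g \<union> g')" using gs_comp[OF assms(2) assms(5) g'] .
    then have "g' \<subseteq> g" using M unfolding max_garbage_set_def by blast
    moreover have "g' \<subseteq> db - g" using gsD(1)[OF g'] .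
    ultimately show "g' = {}" by blast
  qed
qed

end
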